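(* Let $\mathcal{X}$ be a finite set, $\phi\notin\mathcal{X}$, $L,T\in\mathbb{N}$, positions $i_0,\dots,i_{T-1}\in\{0,\dots,L-1\}$ fixed, and $\Pi_t$ ($t=0,\dots,T-1$) probability distributions on $\mathcal{X}\cup\{\phi\}$. Let $X_0\sim P^*$ on $\mathcal{X}^L$, let $Z_0,\dots,Z_{T-1}$ be independent, independent of $X_0$, with $Z_t\sim\Pi_t$, and define the forward process by $X_{t+1,j}=X_{t,j}$ for $j\ne i_t$, $X_{t+1,i_t}=X_{t,i_t}$ if $Z_t=\phi$, and $X_{t+1,i_t}=Z_t$ if $Z_t\in\mathcal{X}$. Let $P_t$ denote the law of $X_t$. Define the reverse Glauber dynamics as follows: given $\hat X_{t+1}\in\mathcal{X}^L$, set $\hat X_{t,j}=\hat X_{t+1,j}$ for all $j\neq i_t$, and sample $\hat X_{t,i_t}$ from the distribution $a\mapsto\mathbb{P}\big(X_{t,i_t}=a\mid X_{t+1,-i_t}=\hat X_{t+1,-i_t}\big)$ (computed under the forward process). If $\hat X_T\sim P_T$ and $\hat X_0$ is obtained by applying the reverse Glauber dynamics successively for $t=T-1,T-2,\dots,0$, then $\hat X_0\sim P^*$.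
   Context: For $x\in\mathcal{X}^L$ and $i\in\{0,\dots,L-1\}$, $x_i$ is the $i$-th coordinate and $x_{-i}\in\mathcal{X}^{L-1}$ is the sequence obtained by deleting the $i$-th coordinate. *)

theory Defs
  imports "HOL-Probability.Probability"
begin

text \<open>Sequences in X^L are lists of length L; the extra symbol phi is None
  (elements of X are encoded as Some a), so phi is not in X by construction.\<close>

definition del_at :: "nat \<Rightarrow> 'a list \<Rightarrow> 'a list" where
  "del_at i xs = take i xs @ drop (Suc i) xs"

definition fwd_step :: "(nat \<Rightarrow> nat) \<Rightarrow> (nat \<Rightarrow> 'a option pmf) \<Rightarrow> nat \<Rightarrow> 'a list \<Rightarrow> 'a list pmf" where
  "fwd_step pos Pz t x =
     map_pmf (\<lambda>z. case z of None \<Rightarrow> x | Some a \<Rightarrow> x[pos t := a]) (Pz t)"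

fun fwd_law :: "'a list pmf \<Rightarrow> (nat \<Rightarrow> nat) \<Rightarrow> (nat \<Rightarrow> 'a option pmf) \<Rightarrow> nat \<Rightarrow> 'a list pmf" where
  "fwd_law Pstar pos Pz 0 = Pstar"
| "fwd_law Pstar pos Pz (Suc t) = bind_pmf (fwd_law Pstar pos Pz t) (fwd_step pos Pz t)"

definition fwd_joint :: "'a list pmf \<Rightarrow> (nat \<Rightarrow> nat) \<Rightarrow> (nat \<Rightarrow> 'a option pmf) \<Rightarrow> nat \<Rightarrow> ('a list \<times> 'a list) pmf" where
  "fwd_joint Pstar pos Pz t =
     bind_pmf (fwd_law Pstar pos Pz t) (\<lambda>x. map_pmf (\<lambda>x'. (x, x')) (fwd_step pos Pz t x))"

text \<open>When the conditioning event has probability zero (irrelevant under P_{t+1}), y is kept.\<close>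
definition rev_step :: "'a list pmf \<Rightarrow> (nat \<Rightarrow> nat) \<Rightarrow> (nat \<Rightarrow> 'a option pmf) \<Rightarrow> nat \<Rightarrow> 'a list \<Rightarrow> 'a list pmf" where
  "rev_step Pstar pos Pz t y =
     (let J = fwd_joint Pstar pos Pz t;
          A = {(x, x'). del_at (pos t) x' = del_at (pos t) y}
      in if set_pmf J \<inter> A = {} then return_pmf y
         else map_pmf (\<lambda>a. y[pos t := a]) (map_pmf (\<lambda>(x, x'). x ! pos t) (cond_pmf J A)))"

text \<open>rev_iter n Q applies the reverse steps for t = n-1, n-2, ..., 0 to an initial law Q.\<close>
fun rev_iter :: "'a list pmf \<Rightarrow> (nat \<Rightarrow> nat) \<Rightarrow> (nat \<Rightarrow> 'a option pmf) \<Rightarrow> nat \<Rightarrow> 'a list pmf \<Rightarrow> 'a list pmf" where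
  "rev_iter Pstar pos Pz 0 Q = Q"
| "rev_iter Pstar pos Pz (Suc n) Q = rev_iter Pstar pos Pz n (bind_pmf Q (rev_step Pstar pos Pz n))"

end

theory Submission
  imports Defs
begin

lemma del_at_upd: "del_at i (x[i:=a]) = del_at i x"
  unfolding del_at_def
  by (cases "i < length x") (auto simp: list_update_beyond)

lemma del_at_eq_upd:
  assumes "length x = length y" "i < length x" "del_at i x = del_at i y"
  shows "y[i := x!i] = x"
proof -
  have "take i x = take i y \<and> drop (Suc i) x = drop (Suc i) y"
    using assms unfolding del_at_def by (simp add: append_eq_append_conv)
  then show ?thesis using assms
    by (metis id_take_nth_drop upd_conv_take_nth_drop)
qed

lemma cond_pmf_set_eq:
  assumes "set_pmf p \<inter> A = set_pmf p \<inter> B" "set_pmf p \<inter> A \<noteq> {}"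
  shows "cond_pmf p A = cond_pmf p B"
proof -
  have m: "measure p A = measure p B"
    by (metis assms(1) measure_Int_set_pmf Int_commute)
  show ?thesis
  proof (rule pmf_eqI)
    fix x
    show "pmf (cond_pmf p A) x = pmf (cond_pmf p B) x"
    proof -
      have ne2: "set_pmf p \<inter> B \<noteq> {}" using assms by simp
      show ?thesis
        unfolding pmf_cond[OF assms(2)] pmf_cond[OF ne2] m
        using assms(1) by (metis IntI pmf_eq_0_set_pmf div_0 IntD2)
    qed
  qed
qed

lemma fwd_len:
  assumes "\<And>t. t < T \<Longrightarrow> pos t < L"
    and "set_pmf Pstar \<subseteq> {xs. length xs = L \<and> set xs \<subseteq> X}"
  shows "t \<le> T \<Longrightarrow> x \<in> set_pmf (fwd_law Pstar pos Pz t) \<Longrightarrow> length x = L"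
proof (induction t arbitrary: x)
  case 0 then show ?case using assms by auto
next
  case (Suc t)
  then show ?case by (auto simp: fwd_step_def split: option.splits)
qed

lemma marg:
  "map_pmf (del_at (pos t)) (fwd_law Pstar pos Pz (Suc t)) = map_pmf (del_at (pos t)) (fwd_law Pstar pos Pz t)"
proof -
  have "map_pmf (del_at (pos t)) (fwd_law Pstar pos Pz (Suc t)) =
     bind_pmf (fwd_law Pstar pos Pz t) (\<lambda>x. map_pmf (del_at (pos t)) (fwd_step pos Pz t x))"
    by (simp add: map_bind_pmf)
  also have "\<dots> = bind_pmf (fwd_law Pstar pos Pz t) (\<lambda>x. return_pmf (del_at (pos t) x))"
  proof (intro bind_pmf_cong refl)
    fix x
    have "map_pmf (del_at (pos t)) (fwd_step pos Pz t x) = map_pmf (\<lambda>_. del_at (pos t) x) (Pz t)"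
      unfolding fwd_step_def map_pmf_comp
      by (intro map_pmf_cong refl) (auto simp: del_at_upd split: option.splits)
    then show "map_pmf (del_at (pos t)) (fwd_step pos Pz t x) = return_pmf (del_at (pos t) x)"
      by simp
  qed
  finally show ?thesis by (simp add: map_pmf_def)
qed

lemma fst_joint: "map_pmf fst (fwd_joint Pstar pos Pz t) = fwd_law Pstar pos Pz t"
  unfolding fwd_joint_def by (simp add: map_bind_pmf map_pmf_comp bind_return_pmf')

lemma joint_del: "(x, x') \<in> set_pmf (fwd_joint Pstar pos Pz t) \<Longrightarrow> del_at (pos t) x' = del_at (pos t) x"
  unfolding fwd_joint_def fwd_step_def by (auto simp: del_at_upd split: option.splits)

lemma rev_step_eq:
  assumes len: "\<And>x. x \<in> set_pmf (fwd_law Pstar pos Pz t) \<Longrightarrow> length x = L"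
    and lenS: "\<And>x. x \<in> set_pmf (fwd_law Pstar pos Pz (Suc t)) \<Longrightarrow> length x = L"
    and p: "pos t < L"
    and y: "y \<in> set_pmf (fwd_law Pstar pos Pz (Suc t))"
  shows "rev_step Pstar pos Pz t y = cond_pmf (fwd_law Pstar pos Pz t) {x. del_at (pos t) x = del_at (pos t) y}"
proof -
  define J where "J = fwd_joint Pstar pos Pz t"
  define A where "A = {(x::'a list, x'). del_at (pos t) x' = del_at (pos t) y}"
  define S where "S = {x. del_at (pos t) x = del_at (pos t) y}"
  obtain x0 where x0: "x0 \<in> set_pmf (fwd_law Pstar pos Pz t)" "y \<in> set_pmf (fwd_step pos Pz t x0)"
    using y by auto
  have x0J: "(x0, y) \<in> set_pmf J" unfolding J_def fwd_joint_def using x0 by auto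
  have ne: "set_pmf J \<inter> A \<noteq> {}" using x0J unfolding A_def by auto
  have eqs: "set_pmf J \<inter> A = set_pmf J \<inter> fst -` S"
    unfolding A_def S_def J_def using joint_del by fastforce
  have ne2: "set_pmf J \<inter> fst -` S \<noteq> {}" using ne eqs by simp
  have c: "cond_pmf J A = cond_pmf J (fst -` S)" by (rule cond_pmf_set_eq[OF eqs ne])
  have "rev_step Pstar pos Pz t y = map_pmf (\<lambda>z. y[pos t := fst z ! pos t]) (cond_pmf J A)"
    unfolding rev_step_def Let_def J_def[symmetric] A_def[symmetric] using ne
    by (simp add: map_pmf_comp case_prod_beta)
  also have "\<dots> = map_pmf fst (cond_pmf J A)"
  proof (intro map_pmf_cong refl)
    fix z assume z: "z \<in> set_pmf (cond_pmf J A)"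
    obtain x x' where zz: "z = (x, x')" by force
    have zJ: "(x, x') \<in> set_pmf J" and zA: "(x, x') \<in> A" using z ne zz by auto
    have xl: "x \<in> set_pmf (fwd_law Pstar pos Pz t)"
      using zJ fst_joint[of Pstar pos Pz t] unfolding J_def
      by (metis fst_conv pmf.set_map imageI)
    have "del_at (pos t) x = del_at (pos t) y"
      using zA joint_del[of x x'] zJ unfolding A_def J_def by auto
    then have "y[pos t := x ! pos t] = x"
      using del_at_eq_upd[of x y "pos t"] len[OF xl] lenS[OF y] p by auto
    then show "y[pos t := fst z ! pos t] = fst z" using zz by simp
  qed
  also have "\<dots> = map_pmf fst (cond_pmf J (fst -` S))" using c by simp
  also have "\<dots> = cond_pmf (map_pmf fst J) S" by (rule cond_map_pmf[symmetric, OF ne2])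
  also have "\<dots> = cond_pmf (fwd_law Pstar pos Pz t) S" unfolding J_def fst_joint ..
  finally show ?thesis unfolding S_def .
qed

lemma back_step:
  assumes len: "\<And>x. x \<in> set_pmf (fwd_law Pstar pos Pz t) \<Longrightarrow> length x = L"
    and lenS: "\<And>x. x \<in> set_pmf (fwd_law Pstar pos Pz (Suc t)) \<Longrightarrow> length x = L"
    and p: "pos t < L"
  shows "bind_pmf (fwd_law Pstar pos Pz (Suc t)) (rev_step Pstar pos Pz t) = fwd_law Pstar pos Pz t"
proof -
  let ?f = "del_at (pos t)"
  let ?P = "fwd_law Pstar pos Pz t" and ?Q = "fwd_law Pstar pos Pz (Suc t)"
  have m: "map_pmf ?f ?Q = map_pmf ?f ?P" by (rule marg)
  have "bind_pmf ?Q (rev_step Pstar pos Pz t) = bind_pmf ?Q (\<lambda>y. cond_pmf ?P {x. ?f y = ?f x})"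
  proof (intro bind_pmf_cong refl)
    fix y assume y: "y \<in> set_pmf ?Q"
    show "rev_step Pstar pos Pz t y = cond_pmf ?P {x. ?f y = ?f x}"
      using rev_step_eq[where L=L and Pstar=Pstar and pos=pos and Pz=Pz and t=t, OF len lenS p y]
      by (simp add: eq_commute)
  qed
  also have "\<dots> = ?P"
  proof (rule bind_cond_pmf_cancel)
    fix y assume "y \<in> set_pmf ?Q"
    then have "?f y \<in> set_pmf (map_pmf ?f ?P)" using m by (metis imageI pmf.set_map)
    then show "set_pmf ?P \<inter> {x. ?f y = ?f x} \<noteq> {}" by auto
  next
    fix x assume "x \<in> set_pmf ?P"
    then have "?f x \<in> set_pmf (map_pmf ?f ?Q)" using m by (metis imageI pmf.set_map)
    then show "set_pmf ?Q \<inter> {y. ?f y = ?f x} \<noteq> {}" by auto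
  next
    fix y x :: "'a list" assume "?f y = ?f x"
    have "measure ?P {x'. ?f y = ?f x'} = measure (map_pmf ?f ?P) {?f y}"
      by (simp add: measure_map_pmf vimage_def eq_commute)
    also have "\<dots> = measure (map_pmf ?f ?Q) {?f x}" using m \<open>?f y = ?f x\<close> by simp
    also have "\<dots> = measure ?Q {y'. ?f y' = ?f x}"
      by (simp add: measure_map_pmf vimage_def)
    finally show "measure ?P {x'. ?f y = ?f x'} = measure ?Q {y'. ?f y' = ?f x}" .
  qed
  finally show ?thesis .
qed

theorem lemma2:
  fixes X :: "'a set" and L T :: nat and pos :: "nat \<Rightarrow> nat"
    and Pz :: "nat \<Rightarrow> 'a option pmf" and Pstar :: "'a list pmf"
  assumes "finite X"
    and "\<And>t. t < T \<Longrightarrow> pos t < L"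
    and "\<And>t. t < T \<Longrightarrow> set_pmf (Pz t) \<subseteq> Some ` X \<union> {None}"
    and "set_pmf Pstar \<subseteq> {xs. length xs = L \<and> set xs \<subseteq> X}"
  shows "rev_iter Pstar pos Pz T (fwd_law Pstar pos Pz T) = Pstar"
proof -
  have lenT: "n \<le> T \<Longrightarrow> x \<in> set_pmf (fwd_law Pstar pos Pz n) \<Longrightarrow> length x = L" for n x
  proof (induction n arbitrary: x)
    case 0 then show ?case using assms(4) by auto
  next
    case (Suc n)
    then show ?case by (auto simp: fwd_step_def split: option.splits)
  qed
  have "n \<le> T \<Longrightarrow> rev_iter Pstar pos Pz n (fwd_law Pstar pos Pz n) = Pstar" for n
  proof (induction n)
    case 0 then show ?case by simp
  next
    case (Suc n)
    have "bind_pmf (fwd_law Pstar pos Pz (Suc n)) (rev_step Pstar pos Pz n) = fwd_law Pstar pos Pz n"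
    proof (rule back_step[where L = L])
      fix x assume "x \<in> set_pmf (fwd_law Pstar pos Pz n)"
      then show "length x = L" using lenT[of n x] Suc.prems by simp
    next
      fix x assume "x \<in> set_pmf (fwd_law Pstar pos Pz (Suc n))"
      then show "length x = L" using lenT[of "Suc n" x] Suc.prems by simp
    next
      show "pos n < L" using assms(2) Suc.prems by force
    qed
    then show ?case using Suc by simp
  qed
  then show ?thesis by simp
qed

end
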